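(* Let $q$ be a prime power, $k\ge 1$ and $t\ge 0$ integers. Suppose there exists an $[n,k]_q$ MWS code with $n<q^t$. Then there exists an $[N,k+1]_q$ MWS code with $N<q^{t+k+1}$.
   Context: An $[n,k]_q$ code is a $k$-dimensional subspace of $\mathbb{F}_q^n$ (non-degenerate, i.e. no coordinate identically zero on the code, when $k\ge2$). It is MWS if the set of its non-zero Hamming weights has cardinality $\frac{q^k-1}{q-1}$. *)

theory Defs
  imports Main HOL.Vector_Spaces "HOL-Library.Function_Algebras" "HOL-Library.Cardinality"
begin

text \<open>Vectors of F_q^n are modelled as functions nat => 'a vanishing outside {..<n};
  'a is a finite field, so q = CARD('a) is automatically a prime power.\<close>

definition cscale :: "'a::field \<Rightarrow> (nat \<Rightarrow> 'a) \<Rightarrow> (nat \<Rightarrow> 'a)" where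
  "cscale c v = (\<lambda>i. c * v i)"

interpretation fvs: vector_space "cscale :: 'a::field \<Rightarrow> (nat \<Rightarrow> 'a) \<Rightarrow> (nat \<Rightarrow> 'a)"
  by unfold_locales (auto simp: cscale_def fun_eq_iff algebra_simps)

definition ambient :: "nat \<Rightarrow> (nat \<Rightarrow> 'a::zero) set" where
  "ambient n = {v. \<forall>i\<ge>n. v i = 0}"

definition hweight :: "nat \<Rightarrow> (nat \<Rightarrow> 'a::zero) \<Rightarrow> nat" where
  "hweight n v = card {i. i < n \<and> v i \<noteq> 0}"

definition is_code :: "nat \<Rightarrow> nat \<Rightarrow> (nat \<Rightarrow> 'a::field) set \<Rightarrow> bool" where
  "is_code n k C \<longleftrightarrow> C \<subseteq> ambient n \<and> fvs.subspace C \<and> fvs.dim C = k \<and>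
     (k \<ge> 2 \<longrightarrow> (\<forall>i<n. \<exists>v\<in>C. v i \<noteq> 0))"

text \<open>MWS: the number of distinct non-zero weights is (q^k-1)/(q-1) (an exact division).\<close>
definition is_MWS :: "nat \<Rightarrow> nat \<Rightarrow> (nat \<Rightarrow> 'a::{finite,field}) set \<Rightarrow> bool" where
  "is_MWS n k C \<longleftrightarrow> is_code n k C \<and>
     card ({hweight n v | v. v \<in> C} - {0}) = (CARD('a) ^ k - 1) div (CARD('a) - 1)"

end

theory Submission
  imports Defs
begin


lemma geom_nat: "(q - 1) * (\<Sum>i<k. q^i) = q^k - (1::nat)" if "q \<ge> 1"
proof (induction k)
  case 0 then show ?case by simp
next
  case (Suc k)
  have "(q - 1) * (\<Sum>i<Suc k. q^i) = (q - 1) * (\<Sum>i<k. q^i) + (q - 1) * q^k"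
    by (simp add: distrib_left)
  also have "\<dots> = (q^k - 1) + (q - 1) * q^k" using Suc.IH by simp
  also have "\<dots> = q^Suc k - 1"
  proof -
    have "q^k \<ge> 1" using that by simp
    then show ?thesis using that by (simp add: diff_mult_distrib algebra_simps)
  qed
  finally show ?case .
qed

lemma theta_eq: "(q^k - 1) div (q - 1) = (\<Sum>i<k. q^i)" if "q \<ge> (2::nat)"
proof -
  have "q^k - 1 = (q - 1) * (\<Sum>i<k. q^i)" using geom_nat[of q k] that by simp
  moreover have "q - 1 > 0" using that by simp
  ultimately show ?thesis by simp
qed

lemma digits_bound:
  assumes "\<forall>j<k. d j < (q::nat)"
  shows "(\<Sum>j<k. q^j * d j) < q^k"
  using assms
proof (induction k)
  case 0 then show ?case by simp
next
  case (Suc k)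
  then have IH: "(\<Sum>j<k. q^j * d j) < q^k" and dk: "d k + 1 \<le> q" by auto
  have "(\<Sum>j<Suc k. q^j * d j) = (\<Sum>j<k. q^j * d j) + q^k * d k" by simp
  also have "\<dots> < q^k + q^k * d k" using IH by simp
  also have "\<dots> = q^k * (d k + 1)" by (simp add: algebra_simps)
  also have "\<dots> \<le> q^k * q" using dk by (intro mult_le_mono2)
  finally show ?case by (simp add: mult.commute)
qed

lemma digits_inj:
  assumes "\<forall>j<k. d j < (q::nat)" "\<forall>j<k. d' j < q"
    and "(\<Sum>j<k. q^j * d j) = (\<Sum>j<k. q^j * d' j)"
  shows "\<forall>j<k. d j = d' j"
  using assms
proof (induction k)
  case 0 then show ?case by simp
next
  case (Suc k)
  let ?S = "\<Sum>j<k. q^j * d j" and ?S' = "\<Sum>j<k. q^j * d' j"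
  have b1: "?S < q^k" and b2: "?S' < q^k" using Suc.prems by (auto intro!: digits_bound)
  have qk: "q^k > 0" using b1 by linarith
  have eq: "?S + q^k * d k = ?S' + q^k * d' k" using Suc.prems(3) by simp
  have "(?S + q^k * d k) div q^k = d k" using b1 qk by simp
  moreover have "(?S' + q^k * d' k) div q^k = d' k" using b2 qk by simp
  ultimately have dk: "d k = d' k" using eq by simp
  then have SS: "?S = ?S'" using eq by simp
  have p1: "\<forall>j<k. d j < q" and p2: "\<forall>j<k. d' j < q" using Suc.prems(1,2) by auto
  have "\<forall>j<k. d j = d' j" by (rule Suc.IH[OF p1 p2 SS])
  then show ?case using dk by (auto simp: less_Suc_eq)
qed

lemma sum_less_nat: "2 * (\<Sum>i<q. i) = q * (q - (1::nat))"
proof (induction q)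
  case 0 then show ?case by simp
next
  case (Suc q) then show ?case by (cases q) (simp_all add: algebra_simps)
qed

lemma finite_ambient: "finite (ambient n :: (nat \<Rightarrow> 'a::{finite,zero}) set)"
proof -
  have "inj_on (\<lambda>v. map v [0..<n]) (ambient n :: (nat \<Rightarrow> 'a) set)"
  proof (rule inj_onI)
    fix u v :: "nat \<Rightarrow> 'a" assume u: "u \<in> ambient n" and v: "v \<in> ambient n"
      and eq: "map u [0..<n] = map v [0..<n]"
    show "u = v"
    proof
      fix i show "u i = v i"
        using u v eq by (cases "i < n") (auto simp: ambient_def map_eq_conv)
    qed
  qed
  moreover have "(\<lambda>v. map v [0..<n]) ` (ambient n :: (nat \<Rightarrow> 'a) set) \<subseteq> {xs. set xs \<subseteq> UNIV \<and> length xs = n}"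
    by auto
  moreover have "finite {xs. set xs \<subseteq> (UNIV::'a set) \<and> length xs = n}"
    by (rule finite_lists_length_eq) simp
  ultimately have "finite ((\<lambda>v. map v [0..<n]) ` (ambient n :: (nat \<Rightarrow> 'a) set))"
    using finite_subset by blast
  then show ?thesis using finite_imageD \<open>inj_on _ _\<close> by blast
qed

lemma hweight_scale:
  assumes "c \<noteq> 0"
  shows "hweight m (cscale c v) = hweight m (v :: nat \<Rightarrow> 'a::field)"
  using assms by (simp add: hweight_def cscale_def)

lemma hweight_zero_iff:
  assumes "v \<in> ambient m"
  shows "hweight m v = 0 \<longleftrightarrow> v = 0"
proof
  assume "hweight m v = 0"
  then have "{i. i < m \<and> v i \<noteq> 0} = {}" by (simp add: hweight_def)
  show "v = 0"
  proof
    fix i show "v i = 0 i"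
    proof (cases "i < m")
      case True then show ?thesis using \<open>{i. i < m \<and> v i \<noteq> 0} = {}\<close> by auto
    next
      case False then show ?thesis using assms by (simp add: ambient_def)
    qed
  qed
qed (simp add: hweight_def)

lemma hweight_le: "hweight m v \<le> m"
proof -
  have "{i. i < m \<and> v i \<noteq> 0} \<subseteq> {..<m}" by auto
  then show ?thesis unfolding hweight_def by (metis card_lessThan card_mono finite_lessThan)
qed



lemma card_filter_plus:
  fixes A :: "'x set" and B :: "'y set" and P :: "'x + 'y \<Rightarrow> bool"
  assumes "finite A" "finite B"
  shows "card {e \<in> Inl ` A \<union> Inr ` B. P e} = card {x \<in> A. P (Inl x)} + card {x \<in> B. P (Inr x)}"
proof -
  define L :: "('x + 'y) set" where "L = Inl ` {x \<in> A. P (Inl x)}"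
  define R :: "('x + 'y) set" where "R = Inr ` {x \<in> B. P (Inr x)}"
  have eq: "{e \<in> Inl ` A \<union> Inr ` B. P e} = L \<union> R"
    unfolding L_def R_def by blast
  have d: "L \<inter> R = {}" unfolding L_def R_def by blast
  have "card (L \<union> R) = card L + card R"
    using assms d by (intro card_Un_disjoint) (auto simp: L_def R_def)
  also have "\<dots> = card {x \<in> A. P (Inl x)} + card {x \<in> B. P (Inr x)}"
    by (simp add: card_image L_def R_def)
  finally show ?thesis unfolding eq .
qed

locale mwsc =
  fixes C :: "(nat \<Rightarrow> 'a::{finite,field}) set" and n k t :: nat
    and b :: "nat \<Rightarrow> nat \<Rightarrow> 'a" and g :: "nat \<Rightarrow> (nat \<Rightarrow> 'a) \<Rightarrow> 'a" and \<sigma> :: "'a \<Rightarrow> nat"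
  assumes MWS: "is_MWS n k C" and nt: "n < CARD('a)^t"
    and b_indep: "fvs.independent (b ` {..<k})" and b_span: "C \<subseteq> fvs.span (b ` {..<k})"
    and b_inj: "inj_on b {..<k}" and b_in: "\<And>j. j < k \<Longrightarrow> b j \<in> C"
    and g_add: "\<And>j x y. g j (x + y) = g j x + g j y"
    and g_scale: "\<And>j c x. g j (cscale c x) = c * g j x"
    and g_b: "\<And>j l. j < k \<Longrightarrow> l < k \<Longrightarrow> g j (b l) = (if j = l then 1 else 0)"
    and g_sep: "\<And>y. y \<in> C \<Longrightarrow> (\<forall>j<k. g j y = 0) \<Longrightarrow> y = 0"
    and \<sigma>: "bij_betw \<sigma> UNIV {..<CARD('a)}"
begin

lemma q2: "CARD('a) \<ge> 2"
proof -
  have "card {0::'a, 1} = 2" by simp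
  moreover have "card {0::'a, 1} \<le> CARD('a)" by (rule card_mono) auto
  ultimately show ?thesis by simp
qed

lemma C_amb: "C \<subseteq> ambient n" and C_sub: "fvs.subspace C" and dimC: "fvs.dim C = k"
  and NWC: "card ({hweight n v | v. v \<in> C} - {0}) = (CARD('a) ^ k - 1) div (CARD('a) - 1)"
  using MWS by (auto simp: is_MWS_def is_code_def)

lemma finC: "finite C" using C_amb finite_ambient finite_subset by blast

lemma zero_C: "0 \<in> C" using C_sub fvs.subspace_0 by blast

lemma cscale_apply [simp]: "cscale c f p = c * f p" by (simp add: cscale_def)

lemma cscale_zero [simp]: "cscale c (0::nat \<Rightarrow> 'a) = 0" by (simp add: fun_eq_iff)

lemma g_zero: "g j 0 = 0"
  using g_scale[of j 0 0] by simp

lemma g_diff: "g j (x - y) = g j x - g j y"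
  using g_add[of j "x - y" y] by simp

definition NZ :: "nat set" where "NZ = {i. i < n \<and> (\<exists>v\<in>C. v i \<noteq> 0)}"
definition E1 :: "(nat \<times> 'a \<times> nat) set" where
  "E1 = (SIGMA j:{..<k}. SIGMA s:(UNIV::'a set). {..<CARD('a)^j * \<sigma> s})"
definition EL :: "((nat \<times> 'a \<times> nat) + nat) set" where "EL = Inl ` E1 \<union> Inr ` {..<CARD('a)^k}"
definition LA :: "(nat + (((nat \<times> 'a \<times> nat) + nat) \<times> nat)) set" where
  "LA = Inl ` NZ \<union> Inr ` (EL \<times> {..<CARD('a)^t})"
definition vE :: "((nat \<times> 'a \<times> nat) + nat) \<Rightarrow> (nat \<Rightarrow> 'a) \<Rightarrow> 'a \<Rightarrow> 'a" where
  "vE e y a = (case e of Inl (j, s, r) \<Rightarrow> g j y - s * a | Inr r \<Rightarrow> a)"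
definition val :: "(nat + (((nat \<times> 'a \<times> nat) + nat) \<times> nat)) \<Rightarrow> (nat \<Rightarrow> 'a) \<Rightarrow> 'a \<Rightarrow> 'a" where
  "val l y a = (case l of Inl i \<Rightarrow> y i | Inr (e, r) \<Rightarrow> vE e y a)"
lemma vE_Inl [simp]: "vE (Inl (j, s, r)) y a = g j y - s * a" by (simp add: vE_def)
lemma vE_Inr [simp]: "vE (Inr r) y a = a" by (simp add: vE_def)
lemma val_Inl [simp]: "val (Inl i) y a = y i" by (simp add: val_def)
lemma val_Inr [simp]: "val (Inr (e, r)) y a = vE e y a" by (simp add: val_def)

lemma label_cases:
  obtains (A) i where "l = Inl i" | (B) j s r r' where "l = Inr (Inl (j, s, r), r')"
    | (C) r r' where "l = Inr (Inr r, r')"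
proof (cases l)
  case (Inl i) then show ?thesis using A by simp
next
  case (Inr er)
  obtain e r' where er: "er = (e, r')" by (cases er)
  show ?thesis
  proof (cases e)
    case (Inl x)
    obtain j s r where "x = (j, s, r)" by (cases x)
    then show ?thesis using B Inr er Inl by simp
  next
    case (Inr r) then show ?thesis using C \<open>l = Inr er\<close> er by simp
  qed
qed

definition N :: nat where "N = card LA"
definition pos where "pos = (SOME h. bij_betw h {..<N} LA)"
definition \<Phi> :: "(nat \<Rightarrow> 'a) \<Rightarrow> 'a \<Rightarrow> (nat \<Rightarrow> 'a)" where
  "\<Phi> y a = (\<lambda>p. if p < N then val (pos p) y a else 0)"
definition H :: "(nat \<Rightarrow> 'a) \<Rightarrow> 'a \<Rightarrow> nat" where
  "H y a = card {e \<in> EL. vE e y a \<noteq> 0}"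
definition Z1 :: "(nat \<Rightarrow> 'a) \<Rightarrow> nat" where
  "Z1 y = card {x \<in> E1. g (fst x) y = fst (snd x)}"


lemma fin_NZ: "finite NZ" unfolding NZ_def by (rule finite_subset[of _ "{..<n}"]) auto
lemma fin_E1: "finite E1" unfolding E1_def by (intro finite_SigmaI) auto
lemma fin_EL: "finite EL" unfolding EL_def  using fin_E1 by auto
lemma fin_LA: "finite LA" unfolding LA_def using fin_NZ fin_EL by auto

lemma pos_bij: "bij_betw pos {..<N} LA"
proof -
  obtain h where "bij_betw h {0..<card LA} LA" using ex_bij_betw_nat_finite[OF fin_LA] by blast
  then have "\<exists>h. bij_betw h {..<N} LA" by (auto simp: N_def atLeast0LessThan)
  then show ?thesis unfolding pos_def by (rule someI_ex)
qed

lemma pos_surj: assumes "l \<in> LA" shows "\<exists>p<N. pos p = l"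
proof -
  have "l \<in> pos ` {..<N}" using pos_bij assms by (auto simp: bij_betw_def)
  then show ?thesis by auto
qed

lemma pos_in: "p < N \<Longrightarrow> pos p \<in> LA"
  using pos_bij by (auto simp: bij_betw_def)


lemma hweight_\<Phi>: "hweight N (\<Phi> y a) = card {l \<in> LA. val l y a \<noteq> 0}"
proof -
  have "{p. p < N \<and> \<Phi> y a p \<noteq> 0} = {p \<in> {..<N}. val (pos p) y a \<noteq> 0}"
    by (auto simp: \<Phi>_def)
  moreover have "pos ` {p \<in> {..<N}. val (pos p) y a \<noteq> 0} = {l \<in> LA. val l y a \<noteq> 0}"
    using pos_bij by (auto simp: bij_betw_def)
  moreover have "inj_on pos {p \<in> {..<N}. val (pos p) y a \<noteq> 0}"
    using pos_bij by (auto simp: bij_betw_def intro: inj_on_subset)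
  ultimately have "card {p \<in> {..<N}. val (pos p) y a \<noteq> 0} = card {l \<in> LA. val l y a \<noteq> 0}"
    using card_image by fastforce
  then show ?thesis unfolding hweight_def using \<open>{p. p < N \<and> \<Phi> y a p \<noteq> 0} = _\<close> by simp
qed


lemma card_split: "card {l \<in> LA. val l y a \<noteq> 0} = card {i \<in> NZ. y i \<noteq> 0} + CARD('a)^t * H y a"
proof -
  have "card {l \<in> LA. val l y a \<noteq> 0} = card {i \<in> NZ. val (Inl i) y a \<noteq> 0}
      + card {x \<in> EL \<times> {..<CARD('a)^t}. val (Inr x) y a \<noteq> 0}"
    unfolding LA_def by (rule card_filter_plus) (use fin_NZ fin_EL in auto)
  moreover have "{x \<in> EL \<times> {..<CARD('a)^t}. val (Inr x) y a \<noteq> 0} = {e \<in> EL. vE e y a \<noteq> 0} \<times> {..<CARD('a)^t}"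
    by auto
  moreover have "card ({e \<in> EL. vE e y a \<noteq> 0} \<times> {..<CARD('a)^t}) = H y a * CARD('a)^t"
    by (simp add: H_def card_cartesian_product)
  ultimately show ?thesis by simp
qed

lemma wt_NZ: "y \<in> C \<Longrightarrow> card {i \<in> NZ. y i \<noteq> 0} = hweight n y"
  unfolding hweight_def NZ_def by (rule arg_cong[where f=card]) auto

lemma wt_lt: "hweight n y < CARD('a)^t" using hweight_le[of n y] nt by linarith

lemma W_eq: "y \<in> C \<Longrightarrow> hweight N (\<Phi> y a) = hweight n y + CARD('a)^t * H y a"
  using hweight_\<Phi> card_split wt_NZ by simp

lemma W_div: "y \<in> C \<Longrightarrow> hweight N (\<Phi> y a) div CARD('a)^t = H y a"
  by (simp add: W_eq wt_lt)

lemma W_mod: "y \<in> C \<Longrightarrow> hweight N (\<Phi> y a) mod CARD('a)^t = hweight n y"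
  by (simp add: W_eq wt_lt)


lemma H_split: "H y a = card {x \<in> E1. vE (Inl x) y a \<noteq> 0} + card {r \<in> {..<CARD('a)^k}. a \<noteq> 0}"
proof -
  have "H y a = card {x \<in> E1. vE (Inl x) y a \<noteq> 0} + card {r \<in> {..<CARD('a)^k}. vE (Inr r) y a \<noteq> 0}"
    unfolding H_def EL_def by (rule card_filter_plus) (use fin_E1 in auto)
  then show ?thesis by simp
qed

lemma H0_le: "H y 0 \<le> card E1"
proof -
  have "H y 0 = card {x \<in> E1. vE (Inl x) y 0 \<noteq> 0}" using H_split by simp
  also have "\<dots> \<le> card E1" using fin_E1 by (intro card_mono) auto
  finally show ?thesis .
qed


lemma H1_Z1: "H y 1 + Z1 y = card E1 + CARD('a)^k"
proof -
  have "{r \<in> {..<CARD('a)^k}. (1::'a) \<noteq> 0} = {..<CARD('a)^k}" by (auto simp: lessThan_def)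
  then have h: "H y 1 = card {x \<in> E1. vE (Inl x) y 1 \<noteq> 0} + CARD('a)^k" using H_split by simp
  have s0: "(g (fst x) y = fst (snd x)) = (\<not> (vE (Inl x) y 1 \<noteq> 0))" for x
    by (cases x) simp
  have s: "{x \<in> E1. g (fst x) y = fst (snd x)} = {x \<in> E1. \<not> (vE (Inl x) y 1 \<noteq> 0)}"
    using s0 by blast
  have "card {x \<in> E1. vE (Inl x) y 1 \<noteq> 0} + card {x \<in> E1. \<not> (vE (Inl x) y 1 \<noteq> 0)} = card E1"
  proof -
    have "E1 = {x \<in> E1. vE (Inl x) y 1 \<noteq> 0} \<union> {x \<in> E1. \<not> (vE (Inl x) y 1 \<noteq> 0)}" by auto
    then have "card E1 = card ({x \<in> E1. vE (Inl x) y 1 \<noteq> 0} \<union> {x \<in> E1. \<not> (vE (Inl x) y 1 \<noteq> 0)})"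
      by (rule arg_cong[where f=card])
    moreover have "card ({x \<in> E1. vE (Inl x) y 1 \<noteq> 0} \<union> {x \<in> E1. \<not> (vE (Inl x) y 1 \<noteq> 0)})
       = card {x \<in> E1. vE (Inl x) y 1 \<noteq> 0} + card {x \<in> E1. \<not> (vE (Inl x) y 1 \<noteq> 0)}"
      using fin_E1 by (intro card_Un_disjoint) auto
    ultimately show ?thesis by linarith
  qed
  then show ?thesis using h s unfolding Z1_def by simp
qed

lemma \<sigma>_lt: "\<sigma> s < CARD('a)" using \<sigma> by (auto simp: bij_betw_def)

lemma \<sigma>_inj: "\<sigma> s = \<sigma> s' \<Longrightarrow> s = s'" using \<sigma> by (auto simp: bij_betw_def inj_on_def)


lemma Z1_eq: "Z1 y = (\<Sum>j<k. CARD('a)^j * \<sigma> (g j y))"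
proof -
  have eq: "{x \<in> E1. g (fst x) y = fst (snd x)} =
     (\<lambda>(j, r). (j, g j y, r)) ` (SIGMA j:{..<k}. {..<CARD('a)^j * \<sigma> (g j y)})"
  proof (intro equalityI subsetI)
    fix x assume "x \<in> {x \<in> E1. g (fst x) y = fst (snd x)}"
    then obtain j s r where x: "x = (j, s, r)" "j < k" "r < CARD('a)^j * \<sigma> s" "g j y = s"
      by (cases x) (auto simp: E1_def)
    then show "x \<in> (\<lambda>(j, r). (j, g j y, r)) ` (SIGMA j:{..<k}. {..<CARD('a)^j * \<sigma> (g j y)})"
      by (intro image_eqI[where x="(j, r)"]) auto
  next
    fix x assume "x \<in> (\<lambda>(j, r). (j, g j y, r)) ` (SIGMA j:{..<k}. {..<CARD('a)^j * \<sigma> (g j y)})"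
    then obtain j r where "x = (j, g j y, r)" "j < k" "r < CARD('a)^j * \<sigma> (g j y)" by auto
    then show "x \<in> {x \<in> E1. g (fst x) y = fst (snd x)}" by (simp add: E1_def)
  qed
  have inj: "inj_on (\<lambda>(j, r). (j, g j y, r)) (SIGMA j:{..<k}. {..<CARD('a)^j * \<sigma> (g j y)})"
    by (auto simp: inj_on_def)
  show ?thesis unfolding Z1_def eq card_image[OF inj]
    by (subst card_SigmaI) auto
qed

lemma Z1_lt: "Z1 y < CARD('a)^k"
  unfolding Z1_eq by (rule digits_bound) (auto simp: \<sigma>_lt)


lemma Z1_inj: assumes "y \<in> C" "y' \<in> C" "Z1 y = Z1 y'" shows "y = y'"
proof -
  have "\<forall>j<k. \<sigma> (g j y) = \<sigma> (g j y')"
    using assms(3) unfolding Z1_eq by (intro digits_inj[where q="CARD('a)"]) (auto simp: \<sigma>_lt)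
  then have d: "\<sigma> (g j y) = \<sigma> (g j y')" if "j < k" for j using that by blast
  have "\<forall>j<k. g j (y - y') = 0"
  proof (intro allI impI)
    fix j assume "j < k"
    then have "g j y = g j y'" using d \<sigma>_inj by blast
    then show "g j (y - y') = 0" by (simp add: g_diff)
  qed
  moreover have "y - y' \<in> C" using C_sub assms fvs.subspace_diff by blast
  ultimately have "y - y' = 0" using g_sep by blast
  then show ?thesis by simp
qed

lemma H1_gt: "H y 1 > card E1" using H1_Z1[of y] Z1_lt[of y] by linarith

lemma H1_inj: "y \<in> C \<Longrightarrow> y' \<in> C \<Longrightarrow> H y 1 = H y' 1 \<Longrightarrow> y = y'"
proof -
  assume "y \<in> C" "y' \<in> C" "H y 1 = H y' 1"
  moreover have "Z1 y = Z1 y'" using H1_Z1[of y] H1_Z1[of y'] \<open>H y 1 = H y' 1\<close> by linarith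
  ultimately show "y = y'" using Z1_inj by blast
qed

lemma card_C_le: "card C \<le> CARD('a)^k"
proof -
  have "inj_on Z1 C" using Z1_inj by (auto simp: inj_on_def)
  moreover have "Z1 ` C \<subseteq> {..<CARD('a)^k}" using Z1_lt by auto
  ultimately have "card (Z1 ` C) \<le> card {..<CARD('a)^k}" by (intro card_mono) auto
  then show ?thesis using card_image[OF \<open>inj_on Z1 C\<close>] by simp
qed


lemma val_add: "val l (y + y') (a + a') = val l y a + val l y' a'"
  by (cases l rule: label_cases) (simp_all add: g_add algebra_simps)

lemma val_scale: "val l (cscale c y) (c * a) = c * val l y a"
  by (cases l rule: label_cases) (simp_all add: g_scale algebra_simps)

lemma val_zero: "val l 0 0 = 0"
  by (cases l rule: label_cases) (simp_all add: g_zero)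


lemma \<Phi>_add: "\<Phi> (y + y') (a + a') = \<Phi> y a + \<Phi> y' a'"
  by (simp add: \<Phi>_def fun_eq_iff val_add)

lemma \<Phi>_scale: "\<Phi> (cscale c y) (c * a) = cscale c (\<Phi> y a)"
proof
  fix p show "\<Phi> (cscale c y) (c * a) p = cscale c (\<Phi> y a) p"
    by (simp add: \<Phi>_def val_scale)
qed

lemma \<Phi>_zero: "\<Phi> 0 0 = 0"
  by (simp add: \<Phi>_def fun_eq_iff val_zero)

lemma \<Phi>_decomp: "\<Phi> y a = \<Phi> y 0 + cscale a (\<Phi> 0 1)"
proof -
  have "\<Phi> y a = \<Phi> (y + 0) (0 + a)" by simp
  also have "\<dots> = \<Phi> y 0 + \<Phi> 0 a" by (rule \<Phi>_add)
  also have "\<Phi> 0 a = \<Phi> (cscale a 0) (a * 1)" by simp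
  also have "\<dots> = cscale a (\<Phi> 0 1)" by (rule \<Phi>_scale)
  finally show ?thesis .
qed


definition D :: "(nat \<Rightarrow> 'a) set" where "D = {\<Phi> y a | y a. y \<in> C}"

lemma D_sub: "fvs.subspace D"
  unfolding fvs.subspace_def
proof (intro conjI ballI allI)
  have "0 = \<Phi> 0 0" using \<Phi>_zero by simp
  then show "0 \<in> D" unfolding D_def using zero_C by blast
next
  fix x y assume "x \<in> D" "y \<in> D"
  then obtain y1 a1 y2 a2 where "x = \<Phi> y1 a1" "y = \<Phi> y2 a2" "y1 \<in> C" "y2 \<in> C" unfolding D_def by auto
  moreover have "y1 + y2 \<in> C" using C_sub \<open>y1 \<in> C\<close> \<open>y2 \<in> C\<close> fvs.subspace_add by blast
  moreover have "x + y = \<Phi> (y1 + y2) (a1 + a2)" using \<Phi>_add calculation by simp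
  ultimately show "x + y \<in> D" unfolding D_def by blast
next
  fix c x assume "x \<in> D"
  then obtain y1 a1 where "x = \<Phi> y1 a1" "y1 \<in> C" unfolding D_def by auto
  moreover have "cscale c y1 \<in> C" using C_sub \<open>y1 \<in> C\<close> fvs.subspace_scale by blast
  moreover have "cscale c x = \<Phi> (cscale c y1) (c * a1)" using \<Phi>_scale calculation by simp
  ultimately show "cscale c x \<in> D" unfolding D_def by blast
qed

lemma D_amb: "D \<subseteq> ambient N"
  by (auto simp: D_def ambient_def \<Phi>_def)


lemma D_nondeg: assumes "p < N" shows "\<exists>v\<in>D. v p \<noteq> 0"
proof -
  have l: "pos p \<in> LA" using pos_in assms .
  show ?thesis
  proof (cases "pos p")
    case (Inl i)
    then have "i \<in> NZ" using l by (auto simp: LA_def)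
    then obtain v where v: "v \<in> C" "v i \<noteq> 0" by (auto simp: NZ_def)
    then have "\<Phi> v 0 \<in> D" by (auto simp: D_def)
    moreover have "\<Phi> v 0 p = v i" using assms Inl by (simp add: \<Phi>_def)
    ultimately show ?thesis using v by metis
  next
    case (Inr er)
    then obtain e r where er: "pos p = Inr (e, r)" "e \<in> EL" using l by (auto simp: LA_def)
    show ?thesis
    proof (cases e)
      case (Inl x)
      then obtain j s r' where x: "e = Inl (j, s, r')" "j < k" using er by (auto simp: EL_def E1_def)
      have "\<Phi> (b j) 0 \<in> D" using b_in x by (auto simp: D_def)
      moreover have "\<Phi> (b j) 0 p = 1" using assms er x g_b by (simp add: \<Phi>_def)
      ultimately show ?thesis by (metis one_neq_zero)
    next
      case (Inr r')
      have "\<Phi> 0 1 \<in> D" using zero_C by (auto simp: D_def)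
      moreover have "\<Phi> 0 1 p = 1" using assms er Inr by (simp add: \<Phi>_def)
      ultimately show ?thesis by (metis one_neq_zero)
    qed
  qed
qed


lemma hom: "module_hom cscale cscale (\<lambda>y. \<Phi> y 0)"
proof -
  have vs: "vector_space (cscale :: 'a \<Rightarrow> (nat \<Rightarrow> 'a) \<Rightarrow> _)" by (rule fvs.vector_space_axioms)
  have ad: "\<forall>x y. \<Phi> (x + y) 0 = \<Phi> x 0 + \<Phi> y 0" using \<Phi>_add[of _ _ 0 0] by simp
  have sc: "\<forall>c x. \<Phi> (cscale c x) 0 = cscale c (\<Phi> x 0)" using \<Phi>_scale[of _ _ 0] by simp
  show ?thesis unfolding module_hom_iff module_iff_vector_space using vs ad sc by blast
qed

lemma span_BB: "fvs.span (b ` {..<k}) = C"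
proof -
  have "fvs.span (b ` {..<k}) \<subseteq> C" using b_in C_sub by (intro fvs.span_minimal) auto
  then show ?thesis using b_span by blast
qed

lemma not_NZ: "y \<in> C \<Longrightarrow> i \<notin> NZ \<Longrightarrow> y i = 0"
  using C_amb by (auto simp: NZ_def ambient_def)

lemma inj_\<Phi>0: "inj_on (\<lambda>y. \<Phi> y 0) C"
proof (rule inj_onI)
  fix y y' assume y: "y \<in> C" "y' \<in> C" and eq: "\<Phi> y 0 = \<Phi> y' 0"
  show "y = y'"
  proof
    fix i show "y i = y' i"
    proof (cases "i \<in> NZ")
      case True
      then obtain p where p: "p < N" "pos p = Inl i" using pos_surj by (auto simp: LA_def)
      have "\<Phi> y 0 p = \<Phi> y' 0 p" using eq by simp
      then show ?thesis using p by (simp add: \<Phi>_def)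
    next
      case False then show ?thesis using not_NZ[OF y(1) False] not_NZ[OF y(2) False] by simp
    qed
  qed
qed

lemma e_notin: "\<Phi> 0 1 \<notin> (\<lambda>y. \<Phi> y 0) ` C"
proof
  assume "\<Phi> 0 1 \<in> (\<lambda>y. \<Phi> y 0) ` C"
  then obtain y where "\<Phi> 0 1 = \<Phi> y 0" by auto
  moreover obtain p where p: "p < N" "pos p = Inr (Inr 0, 0)"
  proof -
    have "Inr (Inr 0, 0) \<in> LA" by (auto simp: LA_def EL_def)
    then show ?thesis using pos_surj that by blast
  qed
  ultimately have "\<Phi> 0 1 p = \<Phi> y 0 p" by simp
  then show False using p by (simp add: \<Phi>_def)
qed


lemma dim_D: "fvs.dim D = k + 1"
proof -
  interpret hm: module_hom cscale cscale "\<lambda>y. \<Phi> y 0" by (rule hom)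
  let ?BB = "b ` {..<k}" and ?e = "\<Phi> 0 1"
  let ?BD = "insert ?e ((\<lambda>y. \<Phi> y 0) ` ?BB)"
  have sp: "fvs.span ((\<lambda>y. \<Phi> y 0) ` ?BB) = (\<lambda>y. \<Phi> y 0) ` C"
    using hm.span_image span_BB by simp
  have ind: "fvs.independent ((\<lambda>y. \<Phi> y 0) ` ?BB)"
    using hm.independent_injective_image[OF b_indep] inj_\<Phi>0 span_BB by simp
  have BBC: "?BB \<subseteq> C" using b_in by auto
  have eBB: "?e \<notin> (\<lambda>y. \<Phi> y 0) ` ?BB" using e_notin BBC by blast
  moreover have "?e \<notin> fvs.span ((\<lambda>y. \<Phi> y 0) ` ?BB)" using e_notin sp by simp
  ultimately have indD: "fvs.independent ?BD"
    by (subst fvs.independent_insert) (simp add: ind)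
  have cBB: "card ?BB = k" using b_inj by (simp add: card_image)
  have "card ((\<lambda>y. \<Phi> y 0) ` ?BB) = k"
    using cBB card_image inj_on_subset[OF inj_\<Phi>0 BBC] by metis
  then have cBD: "card ?BD = k + 1"
    using eBB by simp
  have BDD: "?BD \<subseteq> D"
  proof -
    have "?e \<in> D" using zero_C by (auto simp: D_def)
    moreover have "(\<lambda>y. \<Phi> y 0) ` ?BB \<subseteq> D" using BBC by (auto simp: D_def)
    ultimately show ?thesis by auto
  qed
  have DBD: "D \<subseteq> fvs.span ?BD"
  proof
    fix v assume "v \<in> D"
    then obtain y a where v: "v = \<Phi> y a" "y \<in> C" by (auto simp: D_def)
    have "\<Phi> y 0 \<in> fvs.span ((\<lambda>y. \<Phi> y 0) ` ?BB)" using sp v by auto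
    then have 1: "\<Phi> y 0 \<in> fvs.span ?BD" using fvs.span_mono[of _ ?BD] by blast
    have "?e \<in> fvs.span ?BD" by (rule fvs.span_base) simp
    then have "cscale a ?e \<in> fvs.span ?BD" by (rule fvs.span_scale)
    then show "v \<in> fvs.span ?BD" using 1 v \<Phi>_decomp fvs.span_add by metis
  qed
  show ?thesis by (rule fvs.dim_unique[OF BDD DBD indD cBD])
qed


lemma wt_pos: "y \<in> C \<Longrightarrow> y \<noteq> 0 \<Longrightarrow> hweight n y > 0"
  using hweight_zero_iff C_amb by blast

definition line :: "(nat \<Rightarrow> 'a) \<Rightarrow> (nat \<Rightarrow> 'a) set" where
  "line z = (\<lambda>c. cscale c z) ` (UNIV - {0})"

lemma line_card: assumes "z \<noteq> 0" shows "card (line z) = CARD('a) - 1"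
proof -
  obtain i where i: "z i \<noteq> 0" using assms by (auto simp: fun_eq_iff)
  have "inj_on (\<lambda>c. cscale c z) (UNIV - {0})"
  proof (rule inj_onI)
    fix c c' assume "cscale c z = cscale c' z"
    then have "c * z i = c' * z i" by (metis cscale_apply)
    then show "c = c'" using i by simp
  qed
  then have "card (line z) = card (UNIV - {0::'a})" unfolding line_def by (rule card_image)
  also have "\<dots> = CARD('a) - 1" by (simp add: card_Diff_singleton)
  finally show ?thesis .
qed

definition fib :: "nat \<Rightarrow> (nat \<Rightarrow> 'a) set" where
  "fib w = {x \<in> C - {0}. hweight n x = w}"

lemma line_sub: assumes "z \<in> C" "z \<noteq> 0" shows "line z \<subseteq> fib (hweight n z)"
proof
  fix x assume "x \<in> line z"
  then obtain c where c: "c \<noteq> 0" "x = cscale c z" by (auto simp: line_def)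
  have "x \<in> C" using c assms C_sub fvs.subspace_scale by blast
  moreover have "x \<noteq> 0" using c assms by (auto simp: fun_eq_iff)
  moreover have "hweight n x = hweight n z" using c hweight_scale by simp
  ultimately show "x \<in> fib (hweight n z)" by (simp add: fib_def)
qed

definition NW :: "nat set" where "NW = hweight n ` (C - {0})"


lemma NW_eq: "NW = {hweight n v | v. v \<in> C} - {0}"
proof (intro equalityI subsetI)
  fix w assume "w \<in> NW"
  then obtain y where y: "y \<in> C" "y \<noteq> 0" "w = hweight n y" by (auto simp: NW_def)
  then have "w \<noteq> 0" using wt_pos by fastforce
  then show "w \<in> {hweight n v | v. v \<in> C} - {0}" using y by blast
next
  fix w assume "w \<in> {hweight n v | v. v \<in> C} - {0}"
  then obtain v where v: "v \<in> C" "w = hweight n v" "w \<noteq> 0" by blast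
  have "hweight n (0::nat \<Rightarrow> 'a) = 0" by (simp add: hweight_def)
  then have "v \<noteq> 0" using v by auto
  then show "w \<in> NW" using v by (auto simp: NW_def)
qed

lemma card_NW: "card NW = (\<Sum>i<k. CARD('a)^i)"
  using NWC NW_eq theta_eq[OF q2] by simp

lemma fin_fib: "finite (fib w)" using finC by (simp add: fib_def)


lemma card_C0: "card (C - {0}) = (\<Sum>w\<in>NW. card (fib w))"
proof -
  have "C - {0} = (\<Union>w\<in>NW. fib w)" by (auto simp: NW_def fib_def)
  moreover have "card (\<Union>w\<in>NW. fib w) = (\<Sum>w\<in>NW. card (fib w))"
    using finC fin_fib by (intro card_UN_disjoint) (auto simp: NW_def fib_def)
  ultimately show ?thesis by simp
qed

lemma fib_ge: assumes "w \<in> NW" shows "card (fib w) \<ge> CARD('a) - 1"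
proof -
  obtain z where z: "z \<in> C" "z \<noteq> 0" "w = hweight n z" using assms by (auto simp: NW_def)
  then have "card (line z) \<le> card (fib w)" using line_sub fin_fib card_mono by metis
  then show ?thesis using line_card z by simp
qed

lemma qk1: "(CARD('a) - 1) * card NW = CARD('a)^k - 1"
  using card_NW geom_nat[of "CARD('a)" k] q2 by simp

lemma card_C0_ge: "card (C - {0}) \<ge> CARD('a)^k - 1"
proof -
  have "(\<Sum>w\<in>NW. CARD('a) - 1) \<le> (\<Sum>w\<in>NW. card (fib w))" using fib_ge by (intro sum_mono) auto
  then show ?thesis using card_C0 qk1 by (simp add: mult.commute)
qed


lemma card_C: "card C = CARD('a)^k"
proof -
  have "card (C - {0}) = card C - 1" using zero_C finC by (simp add: card_Diff_singleton)
  moreover have "card C \<ge> 1" using zero_C finC by (metis card_0_eq empty_iff less_one not_less)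
  ultimately show ?thesis using card_C0_ge card_C_le by linarith
qed


lemma gen_arith: "(x + 1) * m = m * x + (m::nat)" by simp

lemma proj: assumes y: "y \<in> C" "y \<noteq> 0" and y': "y' \<in> C" "y' \<noteq> 0"
  and w: "hweight n y = hweight n y'"
  shows "\<exists>c. c \<noteq> 0 \<and> y' = cscale c y"
proof (rule ccontr)
  assume nc: "\<not> ?thesis"
  have disj: "line y \<inter> line y' = {}"
  proof (rule ccontr)
    assume "line y \<inter> line y' \<noteq> {}"
    then obtain c c' where cc: "c \<noteq> 0" "c' \<noteq> 0" "cscale c y = cscale c' y'" by (auto simp: line_def)
    have "y' = cscale (c / c') y"
    proof
      fix i have "c * y i = c' * y' i" using cc(3) by (metis cscale_apply)
      then show "y' i = cscale (c / c') y i" using cc by (simp add: field_simps)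
    qed
    moreover have "c / c' \<noteq> 0" using cc by simp
    ultimately show False using nc by blast
  qed
  let ?w = "hweight n y"
  have wNW: "?w \<in> NW" using y by (auto simp: NW_def)
  have "line y \<union> line y' \<subseteq> fib ?w" using line_sub[OF y] line_sub[OF y'] w by simp
  then have "card (line y \<union> line y') \<le> card (fib ?w)" using fin_fib card_mono by metis
  moreover have "card (line y \<union> line y') = 2 * (CARD('a) - 1)"
    using disj line_card y y' fin_fib card_Un_disjoint
    by (metis finite_subset line_sub mult_2 w)
  ultimately have big: "card (fib ?w) \<ge> 2 * (CARD('a) - 1)" by simp
  have fNW: "finite NW" using finC by (simp add: NW_def)
  have "card (C - {0}) = card (fib ?w) + (\<Sum>w\<in>NW - {?w}. card (fib w))"
    using card_C0 sum.remove[OF fNW wNW] by simp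
  moreover have "(\<Sum>w\<in>NW - {?w}. card (fib w)) \<ge> (\<Sum>w\<in>NW - {?w}. CARD('a) - 1)"
    using fib_ge by (intro sum_mono) auto
  moreover have "(\<Sum>w\<in>NW - {?w}. CARD('a) - 1) = (card NW - 1) * (CARD('a) - 1)"
    using fNW wNW by simp
  ultimately have "card (C - {0}) \<ge> 2 * (CARD('a) - 1) + (card NW - 1) * (CARD('a) - 1)"
    using big by linarith
  moreover have "card NW \<ge> 1" using wNW fNW by (metis card_0_eq empty_iff less_one not_less)
  ultimately have "card (C - {0}) \<ge> (card NW + 1) * (CARD('a) - 1)"
    by (simp add: algebra_simps)
  moreover have "(card NW + 1) * (CARD('a) - 1) = (CARD('a) - 1) * card NW + (CARD('a) - 1)"
    by (rule gen_arith)
  ultimately have "card (C - {0}) \<ge> CARD('a)^k - 1 + (CARD('a) - 1)"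
    using qk1 by linarith
  moreover have "card (C - {0}) \<le> CARD('a)^k - 1"
    using card_C zero_C finC by (simp add: card_Diff_singleton)
  ultimately show False using q2 by linarith
qed


end


context mwsc begin

definition S0 where "S0 = (\<lambda>y. hweight N (\<Phi> y 0)) ` (C - {0})"
definition S1 where "S1 = (\<lambda>y. hweight N (\<Phi> y 1)) ` C"

lemma qt_pos: "CARD('a)^t > 0" by simp

lemma WD_eq: "{hweight N v | v. v \<in> D} - {0} = S0 \<union> S1"
proof
  show "{hweight N v | v. v \<in> D} - {0} \<subseteq> S0 \<union> S1"
  proof
    fix w assume "w \<in> {hweight N v | v. v \<in> D} - {0}"
    then obtain y a where ya: "y \<in> C" "w = hweight N (\<Phi> y a)" "w \<noteq> 0" by (auto simp: D_def)
    show "w \<in> S0 \<union> S1"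
    proof (cases "a = 0")
      case True
      have "y \<noteq> 0"
      proof
        assume "y = 0" then have "w = hweight N (0::nat \<Rightarrow> 'a)" using ya True \<Phi>_zero by simp
        then show False using ya by (simp add: hweight_def)
      qed
      then show ?thesis using ya True by (auto simp: S0_def)
    next
      case False
      let ?y = "cscale (inverse a) y"
      have yC: "?y \<in> C" using ya C_sub fvs.subspace_scale by blast
      have "cscale a ?y = y" using False by (simp add: fun_eq_iff)
      then have "\<Phi> y a = cscale a (\<Phi> ?y 1)" using \<Phi>_scale[of a ?y 1] by simp
      then have "w = hweight N (\<Phi> ?y 1)" using ya False hweight_scale by simp
      then show ?thesis using yC by (auto simp: S1_def)
    qed
  qed
next
  show "S0 \<union> S1 \<subseteq> {hweight N v | v. v \<in> D} - {0}"
  proof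
    fix w assume "w \<in> S0 \<union> S1"
    then show "w \<in> {hweight N v | v. v \<in> D} - {0}"
    proof
      assume "w \<in> S0"
      then obtain y where y: "y \<in> C" "y \<noteq> 0" "w = hweight N (\<Phi> y 0)" by (auto simp: S0_def)
      have "w \<noteq> 0" using W_eq[of y 0] wt_pos[of y] y by simp
      moreover have "\<Phi> y 0 \<in> D" using y by (auto simp: D_def)
      ultimately show ?thesis using y by auto
    next
      assume "w \<in> S1"
      then obtain y where y: "y \<in> C" "w = hweight N (\<Phi> y 1)" by (auto simp: S1_def)
      have "H y 1 > 0" using H1_gt[of y] by simp
      then have "w \<noteq> 0" using W_eq[of y 1] y by simp
      moreover have "\<Phi> y 1 \<in> D" using y by (auto simp: D_def)
      ultimately show ?thesis using y by auto
    qed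
  qed
qed


lemma card_S1: "card S1 = CARD('a)^k"
proof -
  have "inj_on (\<lambda>y. hweight N (\<Phi> y 1)) C"
  proof (rule inj_onI)
    fix y y' assume "y \<in> C" "y' \<in> C" "hweight N (\<Phi> y 1) = hweight N (\<Phi> y' 1)"
    then have "H y 1 = H y' 1" using W_div by metis
    then show "y = y'" using H1_inj \<open>y \<in> C\<close> \<open>y' \<in> C\<close> by blast
  qed
  then show ?thesis using card_C by (simp add: S1_def card_image)
qed


lemma card_S0: "card S0 = card NW"
proof -
  have inj: "inj_on (\<lambda>w. w mod CARD('a)^t) S0"
  proof (rule inj_onI)
    fix w1 w2 assume "w1 \<in> S0" "w2 \<in> S0" and eq: "w1 mod CARD('a)^t = w2 mod CARD('a)^t"
    then obtain y y' where y: "y \<in> C" "y \<noteq> 0" "w1 = hweight N (\<Phi> y 0)"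
      and y': "y' \<in> C" "y' \<noteq> 0" "w2 = hweight N (\<Phi> y' 0)" by (auto simp: S0_def)
    have "hweight n y = hweight n y'" using eq y y' W_mod by metis
    then obtain c where c: "c \<noteq> 0" "y' = cscale c y" using proj y y' by blast
    have "\<Phi> y' 0 = cscale c (\<Phi> y 0)" using \<Phi>_scale[of c y 0] c by simp
    then show "w1 = w2" using y y' c hweight_scale[OF c(1), of N "\<Phi> y 0"] by simp
  qed
  have "(\<lambda>w. w mod CARD('a)^t) ` S0 = NW"
  proof -
    have "(\<lambda>w. w mod CARD('a)^t) ` S0 = (\<lambda>y. hweight N (\<Phi> y 0) mod CARD('a)^t) ` (C - {0})"
      by (simp add: S0_def image_image)
    also have "\<dots> = hweight n ` (C - {0})"
      by (rule image_cong) (auto simp: W_mod)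
    finally show ?thesis by (simp add: NW_def)
  qed
  then show ?thesis using card_image[OF inj] by simp
qed


lemma S01_disj: "S0 \<inter> S1 = {}"
proof -
  { fix y y' assume y: "y \<in> C" and y': "y' \<in> C"
      and eq: "hweight N (\<Phi> y 0) = hweight N (\<Phi> y' 1)"
    then have "H y 0 = H y' 1" using W_div by metis
    then have False using H0_le[of y] H1_gt[of y'] by simp }
  then show ?thesis by (auto simp: S0_def S1_def)
qed

lemma fin_S: "finite S0" "finite S1" using finC by (auto simp: S0_def S1_def)


lemma card_WD: "card ({hweight N v | v. v \<in> D} - {0}) = (CARD('a)^(k+1) - 1) div (CARD('a) - 1)"
proof -
  have "card ({hweight N v | v. v \<in> D} - {0}) = card NW + CARD('a)^k"
    using WD_eq card_Un_disjoint[OF fin_S S01_disj] card_S0 card_S1 by simp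
  also have "\<dots> = (\<Sum>i<k+1. CARD('a)^i)" using card_NW by simp
  also have "\<dots> = (CARD('a)^(k+1) - 1) div (CARD('a) - 1)" by (rule theta_eq[OF q2, symmetric])
  finally show ?thesis .
qed


lemma card_E1: "2 * card E1 = CARD('a) * (CARD('a)^k - 1)"
proof -
  have "card E1 = (\<Sum>j<k. \<Sum>s\<in>(UNIV::'a set). CARD('a)^j * \<sigma> s)"
    unfolding E1_def by (subst card_SigmaI) (auto simp: card_SigmaI)
  also have "\<dots> = (\<Sum>j<k. CARD('a)^j * (\<Sum>s\<in>(UNIV::'a set). \<sigma> s))"
    by (simp add: sum_distrib_left)
  also have "(\<Sum>s\<in>(UNIV::'a set). \<sigma> s) = (\<Sum>i<CARD('a). i)"
    using sum.reindex_bij_betw[OF \<sigma>, of "\<lambda>i. i"] by simp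
  also have "(\<Sum>j<k. CARD('a)^j * (\<Sum>i<CARD('a). i)) = (\<Sum>j<k. CARD('a)^j) * (\<Sum>i<CARD('a). i)"
    by (rule sum_distrib_right[symmetric])
  finally have c1: "card E1 = (\<Sum>j<k. CARD('a)^j) * (\<Sum>i<CARD('a). i)" .
  have "2 * card E1 = (\<Sum>j<k. CARD('a)^j) * (2 * (\<Sum>i<CARD('a). i))"
    unfolding c1 by (simp only: ac_simps)
  also have "\<dots> = (\<Sum>j<k. CARD('a)^j) * (CARD('a) * (CARD('a) - 1))"
    by (simp only: sum_less_nat)
  also have "\<dots> = CARD('a) * ((CARD('a) - 1) * (\<Sum>j<k. CARD('a)^j))" by (simp only: ac_simps)
  also have "\<dots> = CARD('a) * (CARD('a)^k - 1)" using geom_nat[of "CARD('a)" k] q2 by simp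
  finally show ?thesis .
qed


lemma N_eq: "N = card NZ + CARD('a)^t * (card E1 + CARD('a)^k)"
proof -
  have "card EL = card E1 + CARD('a)^k"
    unfolding EL_def using fin_E1 by (subst card_Un_disjoint) (auto simp: card_image)
  moreover have "card LA = card NZ + card EL * CARD('a)^t"
    unfolding LA_def using fin_NZ fin_EL
    by (subst card_Un_disjoint) (auto simp: card_image card_cartesian_product)
  ultimately show ?thesis by (simp add: N_def)
qed


lemma arith_aux: "card E1 + CARD('a)^k + 1 \<le> CARD('a)^(k+1)"
proof -
  obtain p where p: "CARD('a) = p + 2" using q2 by (metis add.commute le_Suc_ex)
  have "CARD('a)^k \<ge> 1" by simp
  then obtain R where R: "CARD('a)^k = R + 1" by (metis add.commute le_Suc_ex)
  have "2 * card E1 = (p + 2) * R" using card_E1 p R by simp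
  moreover have "CARD('a)^(k+1) = (p + 2) * (R + 1)" using p R by simp
  ultimately show ?thesis using R by (simp add: algebra_simps)
qed


lemma N_lt: "N < CARD('a)^(t + k + 1)"
proof -
  have "NZ \<subseteq> {..<n}" by (auto simp: NZ_def)
  then have "card NZ \<le> card {..<n}" by (intro card_mono) auto
  then have "card NZ \<le> n" by simp
  then have "card NZ < CARD('a)^t" using nt by simp
  then have "N < CARD('a)^t * (card E1 + CARD('a)^k + 1)" using N_eq by simp
  also have "\<dots> \<le> CARD('a)^t * CARD('a)^(k+1)" by (rule mult_le_mono2[OF arith_aux])
  also have "\<dots> = CARD('a)^(t + k + 1)" by (simp add: power_add)
  finally show ?thesis .
qed


theorem result: "\<exists>N (D :: (nat \<Rightarrow> 'a) set). is_MWS N (k + 1) D \<and> N < CARD('a) ^ (t + k + 1)"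
proof (intro exI conjI)
  show "is_MWS N (k + 1) D"
    unfolding is_MWS_def is_code_def
    using D_amb D_sub dim_D D_nondeg card_WD by blast
  show "N < CARD('a) ^ (t + k + 1)" by (rule N_lt)
qed

end


interpretation fsc: vector_space "(*) :: 'a::field \<Rightarrow> 'a \<Rightarrow> 'a"
  by unfold_locales (auto simp: algebra_simps)

interpretation fvp: vector_space_pair "cscale :: 'a::field \<Rightarrow> (nat \<Rightarrow> 'a) \<Rightarrow> (nat \<Rightarrow> 'a)" "(*) :: 'a::field \<Rightarrow> 'a \<Rightarrow> 'a"
  by unfold_locales

theorem mainTheorem15:
  fixes C :: "(nat \<Rightarrow> 'a::{finite,field}) set" and n k t :: nat
  assumes "k \<ge> 1"
    and "is_MWS n k C"
    and "n < CARD('a) ^ t"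
  shows "\<exists>N (D :: (nat \<Rightarrow> 'a) set). is_MWS N (k + 1) D \<and> N < CARD('a) ^ (t + k + 1)"
proof -
  have Camb: "C \<subseteq> ambient n" and Csub: "fvs.subspace C" and dimC: "fvs.dim C = k"
    using assms(2) by (auto simp: is_MWS_def is_code_def)
  have finC: "finite C" using Camb finite_ambient finite_subset by blast
  obtain B where B: "B \<subseteq> C" "fvs.independent B" "C \<subseteq> fvs.span B" "card B = fvs.dim C"
    by (rule fvs.basis_exists)
  have finB: "finite B" using B finC finite_subset by blast
  obtain b where bb: "bij_betw b {0..<card B} B" using ex_bij_betw_nat_finite[OF finB] by blast
  then have b: "bij_betw b {..<k} B" using B dimC by (simp add: atLeast0LessThan)
  then have bimg: "b ` {..<k} = B" and binj: "inj_on b {..<k}" by (auto simp: bij_betw_def)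
  obtain \<sigma> :: "'a \<Rightarrow> nat" where s0: "bij_betw \<sigma> UNIV {0..<card (UNIV :: 'a set)}"
    using ex_bij_betw_finite_nat[of "UNIV :: 'a set"] by auto
  then have s: "bij_betw \<sigma> UNIV {..<CARD('a)}" by (simp add: atLeast0LessThan)
  define g where "g j = fvp.construct B (\<lambda>v. if v = b j then 1 else (0::'a))" for j
  have lin: "Vector_Spaces.linear (cscale :: 'a \<Rightarrow> (nat \<Rightarrow> 'a) \<Rightarrow> _) ((*) :: 'a \<Rightarrow> 'a \<Rightarrow> 'a) (g j)" for j
    unfolding g_def by (rule fvp.linear_construct[OF B(2)])
  have g_add: "g j (x + y) = g j x + g j y" for j x y using lin[of j] by (simp add: linear_iff)
  have g_scale: "g j (cscale c x) = c * g j x" for j c x using lin[of j] by (simp add: linear_iff)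
  have gB: "v \<in> B \<Longrightarrow> g j v = (if v = b j then 1 else 0)" for j v
    unfolding g_def by (rule fvp.construct_basis[OF B(2)])
  have g_b: "g j (b l) = (if j = l then 1 else 0)" if "j < k" "l < k" for j l
  proof -
    have "b l \<in> B" using bimg that by auto
    then have "g j (b l) = (if b l = b j then 1 else 0)" by (rule gB)
    moreover have "b l = b j \<longleftrightarrow> j = l" using binj that by (auto simp: inj_on_def)
    ultimately show ?thesis by simp
  qed
  have g_sep: "y = 0" if y: "y \<in> C" "\<forall>j<k. g j y = 0" for y
  proof -
    have "y \<in> fvs.span B" using y B by auto
    then obtain u where u: "y = (\<Sum>v\<in>B. cscale (u v) v)" using fvs.span_finite[OF finB] by auto
    have gy: "g j y = u (b j)" if "j < k" for j
    proof -
      have "g j y = (\<Sum>v\<in>B. g j (cscale (u v) v))"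
        unfolding u by (rule fvp.linear_sum[OF lin])
      also have "\<dots> = (\<Sum>v\<in>B. u v * (if v = b j then 1 else 0))"
        using gB g_scale by (intro sum.cong) auto
      also have "\<dots> = u (b j)"
      proof -
        have "b j \<in> B" using that bimg by auto
        then show ?thesis using finB by (simp add: if_distrib sum.delta cong: if_cong)
      qed
      finally show ?thesis .
    qed
    have "\<forall>v\<in>B. u v = 0" using gy y bimg by auto
    then show ?thesis using u by simp
  qed
  interpret mwsc C n k t b g \<sigma>
  proof
    show "is_MWS n k C" by (rule assms(2))
    show "n < CARD('a) ^ t" by (rule assms(3))
    show "fvs.independent (b ` {..<k})" using B bimg by simp
    show "C \<subseteq> fvs.span (b ` {..<k})" using B bimg by simp
    show "inj_on b {..<k}" by (rule binj)
    show "\<And>j. j < k \<Longrightarrow> b j \<in> C" using bimg B by auto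
  qed (auto simp: g_add g_scale g_b g_sep s)
  show ?thesis by (rule result)
qed

end
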